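(* Let $\mathcal G$ be a finite connected groupoid and $\alpha=(S_g,\alpha_g)_{g\in\mathcal G}$ a unital group-type partial action of $\mathcal G$ on a ring $S=\bigoplus_{y\in\mathcal G_0}S_y$, with $S_g=S1_g$. Let $x\in\mathcal G_0$ and $\tau=\{\tau_y\}_{y\in\mathcal G_0}$ a transversal in $\mathcal G$ for $x$ with $S_{\tau_y^{-1}}=S_x$ and $S_{\tau_y}=S_y$ for all $y\in\mathcal G_0$. Then the map $\Phi_\tau:S_x^{\alpha_{\mathcal G(x)}}\to S^{\alpha_{\mathcal G}}$, $\Phi_\tau(a)=\sum_{y\in\mathcal G_0}\alpha_{\tau_y}(a)$, is a ring isomorphism.
   Context: A groupoid is a small category with all morphisms invertible; $\mathcal G_0$ is the set of objects (identified with identity morphisms), $s(g),t(g)$ source and target, $\mathcal G(x,y)=\{g:s(g)=x,t(g)=y\}$, $\mathcal G(x)=\mathcal G(x,x)$; $gh$ is defined iff $s(g)=t(h)$; connected means all $\mathcal G(x,y)\ne\emptyset$. A partial action $\alpha=(S_g,\alpha_g)_{g\in\mathcal G}$ on a ring $S$: for each $g$, $S_{t(g)}$ is an ideal of $S$, $S_g$ an ideal of $S_{t(g)}$, $\alpha_g:S_{g^{-1}}\to S_g$ a ring isomorphism; $\alpha_x=\mathrm{id}_{S_x}$ for $x\in\mathcal G_0$; for composable $(g,h)$, $\alpha_h^{-1}(S_{g^{-1}}\cap S_h)\subseteq S_{(gh)^{-1}}$ and $\alpha_g\alpha_h(a)=\alpha_{gh}(a)$ there. Unital: $S_g=S1_g$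 with $1_g$ a central idempotent. A transversal for $x$ is $\{\tau_y\}_{y\in\mathcal G_0}$ with $\tau_y\in\mathcal G(x,y)$, $\tau_x=x$; $\alpha$ is group-type if some $x$ and transversal satisfy $S_{\tau_y^{-1}}=S_x$, $S_{\tau_y}=S_y$ for all $y$. Invariants: $S^{\alpha_{\mathcal G}}=\{a\in S:\alpha_g(a1_{g^{-1}})=a1_g\ \forall g\in\mathcal G\}$ and $S_x^{\alpha_{\mathcal G(x)}}=\{a\in S_x:\alpha_g(a1_{g^{-1}})=a1_g\ \forall g\in\mathcal G(x)\}$ (the isotropy group $\mathcal G(x)$ acts partially on $S_x$ by $(S_g,\alpha_g)_{g\in\mathcal G(x)}$). *)

theory Defs
  imports Main
begin

text \<open>Groupoids are given by a set of morphisms G, the set of objects G0 (identified with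
identity morphisms), source s, target t, a (partial) composition m (m g h = gh, defined when
s g = t h) and inversion i.\<close>

definition groupoid ::
  "'g set \<Rightarrow> 'g set \<Rightarrow> ('g \<Rightarrow> 'g) \<Rightarrow> ('g \<Rightarrow> 'g) \<Rightarrow> ('g \<Rightarrow> 'g \<Rightarrow> 'g) \<Rightarrow> ('g \<Rightarrow> 'g) \<Rightarrow> bool" where
  "groupoid G G0 s t m i \<longleftrightarrow>
     G0 \<subseteq> G \<and>
     (\<forall>g\<in>G. s g \<in> G0 \<and> t g \<in> G0) \<and>
     (\<forall>x\<in>G0. s x = x \<and> t x = x) \<and>
     (\<forall>g\<in>G. \<forall>h\<in>G. s g = t h \<longrightarrow> m g h \<in> G \<and> s (m g h) = s h \<and> t (m g h) = t g) \<and>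
     (\<forall>f\<in>G. \<forall>g\<in>G. \<forall>h\<in>G. s f = t g \<and> s g = t h \<longrightarrow> m (m f g) h = m f (m g h)) \<and>
     (\<forall>g\<in>G. m (t g) g = g \<and> m g (s g) = g) \<and>
     (\<forall>g\<in>G. i g \<in> G \<and> s (i g) = t g \<and> t (i g) = s g \<and> m g (i g) = t g \<and> m (i g) g = s g)"

definition hom :: "'g set \<Rightarrow> ('g \<Rightarrow> 'g) \<Rightarrow> ('g \<Rightarrow> 'g) \<Rightarrow> 'g \<Rightarrow> 'g \<Rightarrow> 'g set" where
  "hom G s t x y = {g\<in>G. s g = x \<and> t g = y}"

definition connected_groupoid :: "'g set \<Rightarrow> 'g set \<Rightarrow> ('g \<Rightarrow> 'g) \<Rightarrow> ('g \<Rightarrow> 'g) \<Rightarrow> bool" where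
  "connected_groupoid G G0 s t \<longleftrightarrow> (\<forall>x\<in>G0. \<forall>y\<in>G0. hom G s t x y \<noteq> {})"

definition ideal_in :: "'a::ring set \<Rightarrow> 'a set \<Rightarrow> bool" where
  "ideal_in I R \<longleftrightarrow> I \<subseteq> R \<and> 0 \<in> I \<and> (\<forall>a\<in>I. \<forall>b\<in>I. a + b \<in> I \<and> - a \<in> I) \<and>
     (\<forall>r\<in>R. \<forall>a\<in>I. r * a \<in> I \<and> a * r \<in> I)"

abbreviation ideal :: "'a::ring set \<Rightarrow> bool" where
  "ideal I \<equiv> ideal_in I UNIV"

definition ring_iso_on :: "('a::ring \<Rightarrow> 'b::ring) \<Rightarrow> 'a set \<Rightarrow> 'b set \<Rightarrow> bool" where
  "ring_iso_on f A B \<longleftrightarrow> bij_betw f A B \<and>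
     (\<forall>a\<in>A. \<forall>b\<in>A. f (a + b) = f a + f b \<and> f (a * b) = f a * f b)"

definition partial_action ::
  "'g set \<Rightarrow> 'g set \<Rightarrow> ('g \<Rightarrow> 'g) \<Rightarrow> ('g \<Rightarrow> 'g) \<Rightarrow> ('g \<Rightarrow> 'g \<Rightarrow> 'g) \<Rightarrow> ('g \<Rightarrow> 'g)
   \<Rightarrow> ('g \<Rightarrow> 'a::ring set) \<Rightarrow> ('g \<Rightarrow> 'a \<Rightarrow> 'a) \<Rightarrow> bool" where
  "partial_action G G0 s t m i D \<alpha> \<longleftrightarrow>
     (\<forall>g\<in>G. ideal (D (t g)) \<and> ideal_in (D g) (D (t g)) \<and> ring_iso_on (\<alpha> g) (D (i g)) (D g)) \<and>
     (\<forall>x\<in>G0. \<forall>a\<in>D x. \<alpha> x a = a) \<and>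
     (\<forall>g\<in>G. \<forall>h\<in>G. s g = t h \<longrightarrow>
        (\<forall>a\<in>D (i h). \<alpha> h a \<in> D (i g) \<longrightarrow> a \<in> D (i (m g h)) \<and> \<alpha> g (\<alpha> h a) = \<alpha> (m g h) a))"

definition unital_pa :: "'g set \<Rightarrow> ('g \<Rightarrow> 'a::ring set) \<Rightarrow> ('g \<Rightarrow> 'a) \<Rightarrow> bool" where
  "unital_pa G D e \<longleftrightarrow> (\<forall>g\<in>G. D g = range (\<lambda>a. a * e g) \<and> e g * e g = e g \<and> (\<forall>a. a * e g = e g * a))"

definition internal_direct_sum :: "'i set \<Rightarrow> ('i \<Rightarrow> 'a::ring set) \<Rightarrow> bool" where
  "internal_direct_sum I Sf \<longleftrightarrow>
     (\<forall>a. \<exists>!f. (\<forall>j. j \<notin> I \<longrightarrow> f j = 0) \<and> (\<forall>j\<in>I. f j \<in> Sf j) \<and> a = (\<Sum>j\<in>I. f j))"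

definition transversal :: "'g set \<Rightarrow> 'g set \<Rightarrow> ('g \<Rightarrow> 'g) \<Rightarrow> ('g \<Rightarrow> 'g) \<Rightarrow> 'g \<Rightarrow> ('g \<Rightarrow> 'g) \<Rightarrow> bool" where
  "transversal G G0 s t x \<tau> \<longleftrightarrow> (\<forall>y\<in>G0. \<tau> y \<in> hom G s t x y) \<and> \<tau> x = x"

definition group_type ::
  "'g set \<Rightarrow> 'g set \<Rightarrow> ('g \<Rightarrow> 'g) \<Rightarrow> ('g \<Rightarrow> 'g) \<Rightarrow> ('g \<Rightarrow> 'g) \<Rightarrow> ('g \<Rightarrow> 'a set) \<Rightarrow> bool" where
  "group_type G G0 s t i D \<longleftrightarrow> (\<exists>x\<in>G0. \<exists>\<tau>. transversal G G0 s t x \<tau> \<and>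
      (\<forall>y\<in>G0. D (i (\<tau> y)) = D x \<and> D (\<tau> y) = D y))"

definition invariants :: "'g set \<Rightarrow> ('g \<Rightarrow> 'g) \<Rightarrow> ('g \<Rightarrow> 'a::ring) \<Rightarrow> ('g \<Rightarrow> 'a \<Rightarrow> 'a) \<Rightarrow> 'a set" where
  "invariants G i e \<alpha> = {a. \<forall>g\<in>G. \<alpha> g (a * e (i g)) = a * e g}"

definition isotropy_invariants ::
  "'g set \<Rightarrow> ('g \<Rightarrow> 'g) \<Rightarrow> ('g \<Rightarrow> 'g) \<Rightarrow> ('g \<Rightarrow> 'g) \<Rightarrow> ('g \<Rightarrow> 'a::ring set) \<Rightarrow> ('g \<Rightarrow> 'a)
   \<Rightarrow> ('g \<Rightarrow> 'a \<Rightarrow> 'a) \<Rightarrow> 'g \<Rightarrow> 'a set" where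
  "isotropy_invariants G s t i D e \<alpha> x =
     {a\<in>D x. \<forall>g\<in>hom G s t x x. \<alpha> g (a * e (i g)) = a * e g}"

end

theory Submission
  imports Defs
begin

locale ctx =
  fixes G G0 :: "'g set" and s t :: "'g \<Rightarrow> 'g" and m :: "'g \<Rightarrow> 'g \<Rightarrow> 'g" and i :: "'g \<Rightarrow> 'g"
    and D :: "'g \<Rightarrow> 'a::ring set" and e :: "'g \<Rightarrow> 'a" and \<alpha> :: "'g \<Rightarrow> 'a \<Rightarrow> 'a"
    and x :: 'g and \<tau> :: "'g \<Rightarrow> 'g"
  assumes grp: "groupoid G G0 s t m i"
    and fin: "finite G"
    and pa: "partial_action G G0 s t m i D \<alpha>"
    and un: "unital_pa G D e"
    and ds: "internal_direct_sum G0 D"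
    and xG0: "x \<in> G0"
    and tr: "transversal G G0 s t x \<tau>"
    and gt: "\<forall>y\<in>G0. D (i (\<tau> y)) = D x \<and> D (\<tau> y) = D y"
begin

lemma G0G: "G0 \<subseteq> G" using grp unfolding groupoid_def by blast
lemma st: "g \<in> G \<Longrightarrow> s g \<in> G0 \<and> t g \<in> G0" using grp unfolding groupoid_def by blast
lemma obj: "y \<in> G0 \<Longrightarrow> s y = y \<and> t y = y" using grp unfolding groupoid_def by blast
lemma comp: "g \<in> G \<Longrightarrow> h \<in> G \<Longrightarrow> s g = t h \<Longrightarrow> m g h \<in> G \<and> s (m g h) = s h \<and> t (m g h) = t g"
  using grp unfolding groupoid_def by blast
lemma assoc: "f \<in> G \<Longrightarrow> g \<in> G \<Longrightarrow> h \<in> G \<Longrightarrow> s f = t g \<Longrightarrow> s g = t h \<Longrightarrow> m (m f g) h = m f (m g h)"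
  using grp unfolding groupoid_def by blast
lemma unitl: "g \<in> G \<Longrightarrow> m (t g) g = g \<and> m g (s g) = g"
  using grp unfolding groupoid_def by blast
lemma inv: "g \<in> G \<Longrightarrow> i g \<in> G \<and> s (i g) = t g \<and> t (i g) = s g \<and> m g (i g) = t g \<and> m (i g) g = s g"
  using grp unfolding groupoid_def by blast

lemma ii: assumes "g \<in> G" shows "i (i g) = g"
proof -
  have h: "i g \<in> G" "s (i g) = t g" "t (i g) = s g" "m (i g) g = s g" using inv[OF assms] by auto
  have k: "i (i g) \<in> G" "s (i (i g)) = s g" "m (i (i g)) (i g) = t g" using inv[OF h(1)] h by auto
  have "i (i g) = m (i (i g)) (s g)" using unitl[OF k(1)] k by simp
  also have "\<dots> = m (i (i g)) (m (i g) g)" using h by simp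
  also have "\<dots> = m (m (i (i g)) (i g)) g" using assoc[OF k(1) h(1) assms] k h by simp
  also have "\<dots> = g" using k unitl[OF assms] by simp
  finally show ?thesis .
qed

lemma tau: "y \<in> G0 \<Longrightarrow> \<tau> y \<in> G \<and> s (\<tau> y) = x \<and> t (\<tau> y) = y"
  using tr unfolding transversal_def hom_def by blast
lemma taux: "\<tau> x = x" using tr unfolding transversal_def by blast

lemma pa_ideal: "g \<in> G \<Longrightarrow> ideal_in (D g) (D (t g))" using pa unfolding partial_action_def by blast
lemma iso: "g \<in> G \<Longrightarrow> ring_iso_on (\<alpha> g) (D (i g)) (D g)" using pa unfolding partial_action_def by blast
lemma objid: "y \<in> G0 \<Longrightarrow> a \<in> D y \<Longrightarrow> \<alpha> y a = a" using pa unfolding partial_action_def by blast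
lemma pcomp: "g \<in> G \<Longrightarrow> h \<in> G \<Longrightarrow> s g = t h \<Longrightarrow> a \<in> D (i h) \<Longrightarrow> \<alpha> h a \<in> D (i g) \<Longrightarrow>
   a \<in> D (i (m g h)) \<and> \<alpha> g (\<alpha> h a) = \<alpha> (m g h) a"
  using pa unfolding partial_action_def by blast

lemma iso_in: "g \<in> G \<Longrightarrow> a \<in> D (i g) \<Longrightarrow> \<alpha> g a \<in> D g"
  using iso unfolding ring_iso_on_def bij_betw_def by blast
lemma iso_add: "g \<in> G \<Longrightarrow> a \<in> D (i g) \<Longrightarrow> b \<in> D (i g) \<Longrightarrow> \<alpha> g (a + b) = \<alpha> g a + \<alpha> g b"
  using iso unfolding ring_iso_on_def by blast
lemma iso_mult: "g \<in> G \<Longrightarrow> a \<in> D (i g) \<Longrightarrow> b \<in> D (i g) \<Longrightarrow> \<alpha> g (a * b) = \<alpha> g a * \<alpha> g b"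
  using iso unfolding ring_iso_on_def by blast
lemma iso_onto: assumes "g \<in> G" "b \<in> D g" shows "\<exists>a\<in>D (i g). \<alpha> g a = b"
  using iso[OF assms(1)] assms(2) unfolding ring_iso_on_def bij_betw_def by (metis imageE)

lemma Drange: "g \<in> G \<Longrightarrow> D g = range (\<lambda>a. a * e g)" using un unfolding unital_pa_def by blast
lemma eidem: "g \<in> G \<Longrightarrow> e g * e g = e g" using un unfolding unital_pa_def by blast
lemma ecent: "g \<in> G \<Longrightarrow> a * e g = e g * a" using un unfolding unital_pa_def by blast

lemma e_in: "g \<in> G \<Longrightarrow> e g \<in> D g"
  using Drange eidem by (metis rangeI)
lemma mul_in: "g \<in> G \<Longrightarrow> r * e g \<in> D g" using Drange by blast
lemma De: assumes "g \<in> G" "a \<in> D g" shows "a * e g = a"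
proof -
  obtain b where "a = b * e g" using Drange[OF assms(1)] assms(2) by blast
  then show ?thesis using eidem[OF assms(1)] by (simp add: mult.assoc)
qed
lemma Dl: assumes "g \<in> G" "a \<in> D g" shows "r * a \<in> D g"
proof -
  have "r * a = (r * a) * e g" using De[OF assms] by (simp add: mult.assoc)
  then show ?thesis using mul_in[OF assms(1)] by metis
qed
lemma Dr: assumes "g \<in> G" "a \<in> D g" shows "a * r \<in> D g"
proof -
  have "a * r = (a * r) * e g" using De[OF assms] ecent[OF assms(1)]
    by (metis mult.assoc)
  then show ?thesis using mul_in[OF assms(1)] by metis
qed
lemma D_sub: "g \<in> G \<Longrightarrow> D g \<subseteq> D (t g)" using pa_ideal unfolding ideal_in_def by blast
lemma D0: "g \<in> G \<Longrightarrow> 0 \<in> D g" using mul_in[of g 0] by simp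

lemma D_eq_e: assumes "g \<in> G" "h \<in> G" "D g = D h" shows "e g = e h"
proof -
  have "e g = e g * e h" using De[OF assms(2)] e_in[OF assms(1)] assms(3) by simp
  moreover have "e h = e h * e g" using De[OF assms(1)] e_in[OF assms(2)] assms(3) by simp
  ultimately show ?thesis using ecent[OF assms(1), of "e h"] by simp
qed

lemma finG0: "finite G0" using fin G0G finite_subset by blast

lemma disj: assumes "y \<in> G0" "z \<in> G0" "y \<noteq> z" "a \<in> D y" "a \<in> D z" shows "a = 0"
proof -
  define f1 where "f1 = (\<lambda>j. if j = y then a else 0)"
  define f2 where "f2 = (\<lambda>j. if j = z then a else 0)"
  have yG: "y \<in> G" "z \<in> G" using assms G0G by auto
  have "\<forall>j\<in>G0. f1 j \<in> D j" using assms D0 G0G unfolding f1_def by auto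
  moreover have "\<forall>j\<in>G0. f2 j \<in> D j" using assms D0 G0G unfolding f2_def by auto
  moreover have "\<forall>j. j \<notin> G0 \<longrightarrow> f1 j = 0" using assms unfolding f1_def by auto
  moreover have "\<forall>j. j \<notin> G0 \<longrightarrow> f2 j = 0" using assms unfolding f2_def by auto
  moreover have "a = (\<Sum>j\<in>G0. f1 j)" unfolding f1_def using assms finG0 by simp
  moreover have "a = (\<Sum>j\<in>G0. f2 j)" unfolding f2_def using assms finG0 by simp
  ultimately have "f1 = f2" using ds unfolding internal_direct_sum_def by metis
  then have "f1 y = f2 y" by simp
  then show ?thesis unfolding f1_def f2_def using assms by simp
qed

lemma orth: assumes "y \<in> G0" "z \<in> G0" "y \<noteq> z" "a \<in> D y" shows "a * e z = 0"
  using disj[OF assms(1-3)] assms G0G Dr mul_in by blast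

lemma decomp: "b = (\<Sum>y\<in>G0. b * e y)"
proof -
  obtain f where f: "\<forall>j. j \<notin> G0 \<longrightarrow> f j = 0" "\<forall>j\<in>G0. f j \<in> D j" "b = (\<Sum>j\<in>G0. f j)"
    using ds unfolding internal_direct_sum_def by metis
  have "b * e y = f y" if "y \<in> G0" for y
  proof -
    have "b * e y = (\<Sum>j\<in>G0. f j * e y)" using f(3) by (simp add: sum_distrib_right)
    also have "\<dots> = (\<Sum>j\<in>G0. if j = y then f y else 0)"
      using f(2) orth that De G0G by (intro sum.cong) auto
    also have "\<dots> = f y" using that finG0 by simp
    finally show ?thesis .
  qed
  then show ?thesis using f(3) by simp
qed

lemma unit: assumes "g \<in> G" shows "\<alpha> g (e (i g)) = e g"
proof -
  have ig: "i g \<in> G" using inv[OF assms] by simp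
  obtain y where y: "y \<in> D (i g)" "\<alpha> g y = e g" using iso_onto[OF assms e_in[OF assms]] by blast
  have ein: "e (i g) \<in> D (i g)" using e_in[OF ig] .
  have "\<alpha> g (e (i g)) = \<alpha> g (e (i g)) * e g" using De[OF assms iso_in[OF assms ein]] by simp
  also have "\<dots> = \<alpha> g (e (i g) * y)" using iso_mult[OF assms ein y(1)] y(2) by simp
  also have "e (i g) * y = y" using De[OF ig y(1)] ecent[OF ig, of y] by simp
  finally show ?thesis using y(2) by simp
qed

lemma tauD: "y \<in> G0 \<Longrightarrow> D (i (\<tau> y)) = D x \<and> D (\<tau> y) = D y" using gt by blast

lemma itau: assumes "y \<in> G0" shows "i (\<tau> y) \<in> G \<and> s (i (\<tau> y)) = y \<and> t (i (\<tau> y)) = x"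
proof -
  have T: "\<tau> y \<in> G" "s (\<tau> y) = x" "t (\<tau> y) = y" using tau[OF assms] by auto
  show ?thesis using inv[OF T(1)] T by simp
qed

lemma e_tau: assumes "y \<in> G0" shows "e (\<tau> y) = e y" "e (i (\<tau> y)) = e x"
proof -
  have T: "\<tau> y \<in> G" "i (\<tau> y) \<in> G" "y \<in> G" "x \<in> G" using tau[OF assms] itau[OF assms] assms xG0 G0G by auto
  show "e (\<tau> y) = e y" using D_eq_e[OF T(1) T(3)] tauD[OF assms] by blast
  show "e (i (\<tau> y)) = e x" using D_eq_e[OF T(2) T(4)] tauD[OF assms] by blast
qed

lemma inv1: assumes "y \<in> G0" "a \<in> D x" shows "\<alpha> (i (\<tau> y)) (\<alpha> (\<tau> y) a) = a"
proof -
  have T: "\<tau> y \<in> G" "s (\<tau> y) = x" "t (\<tau> y) = y" using tau[OF assms(1)] by auto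
  have I: "i (\<tau> y) \<in> G" "s (i (\<tau> y)) = y" using itau[OF assms(1)] by auto
  have a1: "a \<in> D (i (\<tau> y))" using tauD[OF assms(1)] assms(2) by simp
  have a2: "\<alpha> (\<tau> y) a \<in> D (i (i (\<tau> y)))" using ii[OF T(1)] iso_in[OF T(1) a1] tauD[OF assms(1)] by simp
  have "\<alpha> (i (\<tau> y)) (\<alpha> (\<tau> y) a) = \<alpha> (m (i (\<tau> y)) (\<tau> y)) a"
    using pcomp[OF I(1) T(1) _ a1 a2] I T by simp
  also have "m (i (\<tau> y)) (\<tau> y) = x" using inv[OF T(1)] T by simp
  finally show ?thesis using objid[OF xG0 assms(2)] by simp
qed

lemma inv2: assumes "y \<in> G0" "b \<in> D y" shows "\<alpha> (\<tau> y) (\<alpha> (i (\<tau> y)) b) = b"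
proof -
  have T: "\<tau> y \<in> G" using tau[OF assms(1)] by auto
  obtain a where a: "a \<in> D (i (\<tau> y))" "\<alpha> (\<tau> y) a = b" using iso_onto[OF T] assms tauD by metis
  have ax: "a \<in> D x" using a(1) tauD[OF assms(1)] by simp
  have "\<alpha> (i (\<tau> y)) b = a" using inv1[OF assms(1) ax] a(2) by simp
  then show ?thesis using a(2) by simp
qed

definition Phi where "Phi a = (\<Sum>y\<in>G0. \<alpha> (\<tau> y) a)"

lemma tau_in: assumes "y \<in> G0" "a \<in> D x" shows "\<alpha> (\<tau> y) a \<in> D y"
proof -
  have T: "\<tau> y \<in> G" using tau[OF assms(1)] by auto
  have "a \<in> D (i (\<tau> y))" using tauD[OF assms(1)] assms(2) by simp
  then show ?thesis using iso_in[OF T] tauD[OF assms(1)] by simp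
qed

lemma Phi_e: assumes "w \<in> G0" "a \<in> D x" shows "Phi a * e w = \<alpha> (\<tau> w) a"
proof -
  have "Phi a * e w = (\<Sum>y\<in>G0. \<alpha> (\<tau> y) a * e w)" unfolding Phi_def by (simp add: sum_distrib_right)
  also have "\<dots> = (\<Sum>y\<in>G0. if y = w then \<alpha> (\<tau> w) a else 0)"
  proof (rule sum.cong)
    fix y assume y: "y \<in> G0"
    show "\<alpha> (\<tau> y) a * e w = (if y = w then \<alpha> (\<tau> w) a else 0)"
    proof (cases "y = w")
      case True
      have wG: "w \<in> G" using assms(1) G0G by blast
      have "\<alpha> (\<tau> w) a * e w = \<alpha> (\<tau> w) a" using De[OF wG tau_in[OF assms(1) assms(2)]] .
      then show ?thesis using True by simp
    next
      case False
      then show ?thesis using orth[OF y assms(1) False tau_in[OF y assms(2)]] by simp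
    qed
  qed simp
  also have "\<dots> = \<alpha> (\<tau> w) a" using assms finG0 by simp
  finally show ?thesis .
qed

lemma Phi_x: assumes "a \<in> D x" shows "Phi a * e x = a"
  using Phi_e[OF xG0 assms] taux objid[OF xG0 assms] by simp

lemma esub: assumes "g \<in> G" shows "b * e (i g) = b * e (s g) * e (i g)"
proof -
  have sg: "s g \<in> G" using st[OF assms] G0G by blast
  have ig: "i g \<in> G" "t (i g) = s g" using inv[OF assms(1)] by auto
  have "e (i g) \<in> D (s g)" using D_sub[OF ig(1)] ig(2) e_in[OF ig(1)] by (metis subsetD)
  then have "e (i g) * e (s g) = e (i g)" using De[OF sg] by blast
  moreover have "e (i g) * e (s g) = e (s g) * e (i g)" by (rule ecent[OF sg])
  ultimately have "e (i g) = e (s g) * e (i g)" by (metis (no_types))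
  then show ?thesis by (metis (no_types) mult.assoc)
qed

lemma esub2: assumes "g \<in> G" shows "b * e g = b * e (t g) * e g"
proof -
  have tg: "t g \<in> G" using st[OF assms] G0G by blast
  have "e g \<in> D (t g)" using D_sub[OF assms] e_in[OF assms] by (metis subsetD)
  then have "e g * e (t g) = e g" using De[OF tg] by blast
  moreover have "e g * e (t g) = e (t g) * e g" by (rule ecent[OF tg])
  ultimately have "e g = e (t g) * e g" by (metis (no_types))
  then show ?thesis by (metis (no_types) mult.assoc)
qed

lemma main_gen:
  assumes gG: "g \<in> G"
  defines "u \<equiv> s g" and "v \<equiv> t g"
  defines "h \<equiv> m (i (\<tau> v)) (m g (\<tau> u))"
  defines "w \<equiv> \<alpha> h (\<alpha> (i (\<tau> u)) (e (i g)) * e (i h))"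
  shows "h \<in> G" "s h = x" "t h = x" "w \<in> D x"
    "\<And>a. a \<in> D x \<Longrightarrow> \<alpha> h (a * e (i h)) = a * e h \<Longrightarrow>
       \<alpha> g (\<alpha> (\<tau> u) a * e (i g)) = \<alpha> (\<tau> v) a * \<alpha> (\<tau> v) w"
proof -
  have u: "u \<in> G0" "v \<in> G0" using st[OF gG] u_def v_def by auto
  have Tu: "\<tau> u \<in> G" "s (\<tau> u) = x" "t (\<tau> u) = u" using tau[OF u(1)] by auto
  have Tv: "\<tau> v \<in> G" "s (\<tau> v) = x" "t (\<tau> v) = v" using tau[OF u(2)] by auto
  have Iu: "i (\<tau> u) \<in> G" "s (i (\<tau> u)) = u" "t (i (\<tau> u)) = x" using itau[OF u(1)] by auto
  have Iv: "i (\<tau> v) \<in> G" "s (i (\<tau> v)) = v" "t (i (\<tau> v)) = x" using itau[OF u(2)] by auto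
  define k where "k = m g (\<tau> u)"
  have K: "k \<in> G" "s k = x" "t k = v" using comp[OF gG Tu(1)] Tu u_def v_def k_def by auto
  have H: "h \<in> G" "s h = x" "t h = x" using comp[OF Iv(1) K(1)] Iv K h_def k_def by auto
  then show "h \<in> G" "s h = x" "t h = x" by auto
  have xG: "x \<in> G" "u \<in> G" "v \<in> G" using xG0 u G0G by auto
  have ig: "i g \<in> G" "t (i g) = u" using inv[OF gG] u_def by auto
  have ih: "i h \<in> G" "t (i h) = x" using inv[OF H(1)] H by auto
  have eig: "e (i g) \<in> D u" using D_sub[OF ig(1)] ig(2) e_in[OF ig(1)] by (metis subsetD)
  have DIu: "D (i (i (\<tau> u))) = D u" using ii[OF Tu(1)] tauD[OF u(1)] by simp
  have DIv: "D (i (i (\<tau> v))) = D v" using ii[OF Tv(1)] tauD[OF u(2)] by simp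
  define f where "f = \<alpha> (i (\<tau> u)) (e (i g))"
  have fx: "f \<in> D x" using iso_in[OF Iu(1)] eig DIu tauD[OF u(1)] f_def by simp
  have feh: "f * e (i h) \<in> D (i h)" using mul_in[OF ih(1)] .
  have wh: "w \<in> D h" using iso_in[OF H(1) feh] w_def f_def by simp
  have Dhx: "D h \<subseteq> D x" using D_sub[OF H(1)] H by simp
  show wx: "w \<in> D x" using wh Dhx by blast
  fix a assume ax: "a \<in> D x" and inva: "\<alpha> h (a * e (i h)) = a * e h"
  define b where "b = \<alpha> (\<tau> u) a * e (i g)"
  have bIg: "b \<in> D (i g)" using mul_in[OF ig(1)] b_def by simp
  have bu: "b \<in> D u" using D_sub[OF ig(1)] ig(2) bIg by (metis subsetD)
  have atu: "\<alpha> (\<tau> u) a \<in> D u" using tau_in[OF u(1) ax] .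
  define c where "c = \<alpha> (i (\<tau> u)) b"
  have cx: "c \<in> D x" using iso_in[OF Iu(1)] bu DIu tauD[OF u(1)] c_def by simp
  have cb: "\<alpha> (\<tau> u) c = b" using inv2[OF u(1) bu] c_def by simp
  have c1: "c \<in> D (i (\<tau> u))" using cx tauD[OF u(1)] by simp
  have comp1: "c \<in> D (i k) \<and> \<alpha> g b = \<alpha> k c"
    using pcomp[OF gG Tu(1) _ c1] cb bIg Tu u_def k_def by simp
  have akc: "\<alpha> k c \<in> D v" using iso_in[OF K(1)] comp1 D_sub[OF K(1)] K by auto
  have comp2: "c \<in> D (i h) \<and> \<alpha> (i (\<tau> v)) (\<alpha> k c) = \<alpha> h c"
    using pcomp[OF Iv(1) K(1) _ _] comp1 akc DIv Iv K h_def k_def by simp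
  have step1: "\<alpha> g b = \<alpha> (\<tau> v) (\<alpha> h c)"
    using comp1 comp2 inv2[OF u(2) akc] by simp
  have cf: "c = a * f"
  proof -
    have "c = \<alpha> (i (\<tau> u)) (\<alpha> (\<tau> u) a) * f"
      using iso_mult[OF Iu(1)] atu eig DIu c_def b_def f_def by simp
    then show ?thesis using inv1[OF u(1) ax] by simp
  qed
  have "c = c * e (i h)" using De[OF ih(1)] comp2 by simp
  also have "\<dots> = (a * e (i h)) * (f * e (i h))"
  proof -
    have "a * f * e (i h) = a * e (i h) * (f * e (i h))"
      using eidem[OF ih(1)] ecent[OF ih(1), of f] by (metis mult.assoc)
    then show ?thesis using cf by simp
  qed
  finally have c2: "c = (a * e (i h)) * (f * e (i h))" .
  have "\<alpha> h c = \<alpha> h (a * e (i h)) * \<alpha> h (f * e (i h))"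
    using iso_mult[OF H(1)] c2 mul_in[OF ih(1)] by metis
  also have "\<dots> = a * e h * w" using inva w_def f_def by simp
  also have "\<dots> = a * w"
  proof -
    have "e h * w = w" using De[OF H(1) wh] ecent[OF H(1), of w] by metis
    then show ?thesis by (simp add: mult.assoc)
  qed
  finally have "\<alpha> h c = a * w" .
  then have "\<alpha> g b = \<alpha> (\<tau> v) (a * w)" using step1 by simp
  also have "\<dots> = \<alpha> (\<tau> v) a * \<alpha> (\<tau> v) w"
    using iso_mult[OF Tv(1)] ax wx tauD[OF u(2)] by simp
  finally show "\<alpha> g (\<alpha> (\<tau> u) a * e (i g)) = \<alpha> (\<tau> v) a * \<alpha> (\<tau> v) w" using b_def by simp
qed

lemma eleft: "y \<in> G \<Longrightarrow> b \<in> D y \<Longrightarrow> e y * b = b"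
  using De ecent by metis

lemma Phi_inv: assumes aI: "a \<in> isotropy_invariants G s t i D e \<alpha> x" and gG: "g \<in> G"
  shows "\<alpha> g (Phi a * e (i g)) = Phi a * e g"
proof -
  define u where "u = s g"
  define v where "v = t g"
  define h where "h = m (i (\<tau> v)) (m g (\<tau> u))"
  define w where "w = \<alpha> h (\<alpha> (i (\<tau> u)) (e (i g)) * e (i h))"
  note M = main_gen[OF gG, folded u_def v_def, folded h_def, folded w_def]
  have u: "u \<in> G0" "v \<in> G0" using st[OF gG] u_def v_def by auto
  have xG: "x \<in> G" "u \<in> G" "v \<in> G" using xG0 u G0G by auto
  have ax: "a \<in> D x" using aI unfolding isotropy_invariants_def by blast
  have hhom: "h \<in> hom G s t x x" using M(1-3) unfolding hom_def by blast
  have inva: "\<alpha> h (a * e (i h)) = a * e h" using aI hhom unfolding isotropy_invariants_def by blast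
  have ih: "i h \<in> G" "t (i h) = x" using inv[OF M(1)] M by auto
  have ig: "i g \<in> G" "t (i g) = u" using inv[OF gG] u_def by auto
  have eih: "e (i h) \<in> D x" using D_sub[OF ih(1)] ih(2) e_in[OF ih(1)] by (metis subsetD)
  have eh: "e h \<in> D x" using D_sub[OF M(1)] M(3) e_in[OF M(1)] by (metis subsetD)
  have eig: "e (i g) \<in> D u" using D_sub[OF ig(1)] ig(2) e_in[OF ig(1)] by (metis subsetD)
  have exx: "e x \<in> D x" using e_in[OF xG(1)] .
  have "\<alpha> h (e x * e (i h)) = e x * e h"
    using eleft[OF xG(1) eih] eleft[OF xG(1) eh] unit[OF M(1)] by simp
  from M(5)[OF exx this] have E: "\<alpha> g (\<alpha> (\<tau> u) (e x) * e (i g)) = \<alpha> (\<tau> v) (e x) * \<alpha> (\<tau> v) w" .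
  have "\<alpha> (\<tau> u) (e x) = e u" using unit[of "\<tau> u"] tau[OF u(1)] e_tau[OF u(1)] by simp
  then have L: "\<alpha> g (\<alpha> (\<tau> u) (e x) * e (i g)) = e g" using eleft[OF xG(2) eig] unit[OF gG] by simp
  have "\<alpha> (\<tau> v) (e x) = e v" using unit[of "\<tau> v"] tau[OF u(2)] e_tau[OF u(2)] by simp
  moreover have "\<alpha> (\<tau> v) w \<in> D v" using tau_in[OF u(2) M(4)] .
  ultimately have R: "\<alpha> (\<tau> v) (e x) * \<alpha> (\<tau> v) w = \<alpha> (\<tau> v) w" using eleft[OF xG(3)] by simp
  have W: "\<alpha> (\<tau> v) w = e g" using E L R by simp
  have "Phi a * e (i g) = \<alpha> (\<tau> u) a * e (i g)" using esub[OF gG, of "Phi a"] Phi_e[OF u(1) ax] u_def by simp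
  then have "\<alpha> g (Phi a * e (i g)) = \<alpha> (\<tau> v) a * e g" using M(5)[OF ax inva] W by simp
  also have "\<dots> = Phi a * e g" using esub2[OF gG, of "Phi a"] Phi_e[OF u(2) ax] v_def by simp
  finally show ?thesis .
qed

lemma final: "ring_iso_on Phi (isotropy_invariants G s t i D e \<alpha> x) (invariants G i e \<alpha>)"
proof -
  let ?I = "isotropy_invariants G s t i D e \<alpha> x"
  have IDx: "a \<in> ?I \<Longrightarrow> a \<in> D x" for a unfolding isotropy_invariants_def by blast
  have into: "Phi ` ?I \<subseteq> invariants G i e \<alpha>"
    using Phi_inv unfolding invariants_def by blast
  have injI: "inj_on Phi ?I"
  proof (rule inj_onI)
    fix a b assume "a \<in> ?I" "b \<in> ?I" "Phi a = Phi b"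
    then show "a = b" using Phi_x IDx by metis
  qed
  have onto: "invariants G i e \<alpha> \<subseteq> Phi ` ?I"
  proof
    fix b assume bI: "b \<in> invariants G i e \<alpha>"
    define a where "a = b * e x"
    have xG: "x \<in> G" using xG0 G0G by blast
    have aI: "a \<in> ?I" unfolding isotropy_invariants_def
    proof (intro CollectI conjI ballI)
      show "a \<in> D x" using mul_in[OF xG] a_def by simp
      fix g assume "g \<in> hom G s t x x"
      then have g: "g \<in> G" "s g = x" "t g = x" unfolding hom_def by auto
      have "a * e (i g) = b * e (i g)" using esub[OF g(1), of b] g a_def by simp
      then have "\<alpha> g (a * e (i g)) = b * e g" using bI g unfolding invariants_def by simp
      also have "\<dots> = a * e g" using esub2[OF g(1), of b] g a_def by simp
      finally show "\<alpha> g (a * e (i g)) = a * e g" .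
    qed
    have "Phi a = (\<Sum>y\<in>G0. b * e y)" unfolding Phi_def
    proof (rule sum.cong)
      fix y assume y: "y \<in> G0"
      have T: "\<tau> y \<in> G" using tau[OF y] by blast
      have "a = b * e (i (\<tau> y))" using e_tau[OF y] a_def by simp
      then have "\<alpha> (\<tau> y) a = b * e (\<tau> y)" using bI T unfolding invariants_def by simp
      then show "\<alpha> (\<tau> y) a = b * e y" using e_tau[OF y] by simp
    qed simp
    then have "Phi a = b" using decomp[of b] by simp
    then show "b \<in> Phi ` ?I" using aI by blast
  qed
  have hom: "Phi (a + b) = Phi a + Phi b \<and> Phi (a * b) = Phi a * Phi b" if "a \<in> ?I" "b \<in> ?I" for a b
  proof
    have ax: "a \<in> D x" "b \<in> D x" using that IDx by auto
    have ax': "a \<in> D (i (\<tau> y))" "b \<in> D (i (\<tau> y))" if "y \<in> G0" for y using ax tauD that by auto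
    show "Phi (a + b) = Phi a + Phi b" unfolding Phi_def
      using iso_add tau ax' by (simp add: sum.distrib)
    have "Phi a * Phi b = (\<Sum>y\<in>G0. \<alpha> (\<tau> y) a * Phi b)" unfolding Phi_def[of a] by (simp add: sum_distrib_right)
    also have "\<dots> = (\<Sum>y\<in>G0. \<alpha> (\<tau> y) a * \<alpha> (\<tau> y) b)"
    proof (rule sum.cong)
      fix y assume y: "y \<in> G0"
      have yG: "y \<in> G" using y G0G by blast
      have "\<alpha> (\<tau> y) a * Phi b = \<alpha> (\<tau> y) a * e y * Phi b" using De[OF yG tau_in[OF y ax(1)]] by simp
      also have "\<dots> = \<alpha> (\<tau> y) a * (Phi b * e y)" using ecent[OF yG, of "Phi b"] by (simp add: mult.assoc)
      also have "\<dots> = \<alpha> (\<tau> y) a * \<alpha> (\<tau> y) b" using Phi_e[OF y ax(2)] by simp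
      finally show "\<alpha> (\<tau> y) a * Phi b = \<alpha> (\<tau> y) a * \<alpha> (\<tau> y) b" .
    qed simp
    also have "\<dots> = Phi (a * b)" unfolding Phi_def
      using iso_mult tau ax' by (intro sum.cong) auto
    finally show "Phi (a * b) = Phi a * Phi b" by simp
  qed
  show ?thesis unfolding ring_iso_on_def bij_betw_def using injI into onto hom by blast
qed

end

theorem corollary3p2:
  fixes G G0 :: "'g set" and s t :: "'g \<Rightarrow> 'g" and m :: "'g \<Rightarrow> 'g \<Rightarrow> 'g" and i :: "'g \<Rightarrow> 'g"
    and D :: "'g \<Rightarrow> 'a::ring set" and e :: "'g \<Rightarrow> 'a" and \<alpha> :: "'g \<Rightarrow> 'a \<Rightarrow> 'a"
    and x :: 'g and \<tau> :: "'g \<Rightarrow> 'g"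
  assumes "groupoid G G0 s t m i"
    and "finite G"
    and "connected_groupoid G G0 s t"
    and "partial_action G G0 s t m i D \<alpha>"
    and "unital_pa G D e"
    and "group_type G G0 s t i D"
    and "internal_direct_sum G0 D"
    and "x \<in> G0"
    and "transversal G G0 s t x \<tau>"
    and "\<forall>y\<in>G0. D (i (\<tau> y)) = D x \<and> D (\<tau> y) = D y"
  shows "ring_iso_on (\<lambda>a. \<Sum>y\<in>G0. \<alpha> (\<tau> y) a)
           (isotropy_invariants G s t i D e \<alpha> x) (invariants G i e \<alpha>)"
proof -
  interpret ctx G G0 s t m i D e \<alpha> x \<tau>
    using assms by (unfold_locales) auto
  show ?thesis using final unfolding Phi_def .
qed

end
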